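(* Let $(G,u,v,\alpha,\beta)$ be a Guvab. Then $W(\mu_k,\nu_k)\to0$ as $k\to\infty$ if and only if one of the following holds: (1) $0<\alpha\le\beta<1$; (2) $\alpha=\beta=1$ and $u=v$; (3) $G$ is not bipartite and $0=\alpha\le\beta<1$; (4) $\alpha=\beta=0$ and there exists a walk from $u$ to $v$ with an even number of steps.
   Context: A Guvab is a tuple $(G,u,v,\alpha,\beta)$ where $G$ is a finite, connected, simple graph, $u,v\in V(G)$, and $\alpha,\beta\in[0,1]$ with $\alpha\le\beta$. A random walk on $G$ with starting vertex $w$ and laziness $\gamma$ is the Markov chain $R_0=w$ and, for $i\ge1$, $R_i=R_{i-1}$ with probability $\gamma$ and $R_i=t$ with probability $\frac{1-\gamma}{\deg(R_{i-1})}$ for each neighbor $t$ of $R_{i-1}$. $\mu_k$ is the distribution after $k$ steps of the walk from $u$ with laziness $\alpha$, and $\nu_k$ that of the walk from $v$ with laziness $\beta$. $W(\mu,\nu)$ is the Wasserstein ($L^1$ optimal transport) distance with respect to the graph distance: the minimum over transportation plans (nonnegative $T$ on $V(G)\times V(G)$ with marginals $\mu,\nu$) of $\sum d(w_1,w_2)T(w_1,w_2)$. *)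

theory Defs
  imports "HOL-Analysis.Analysis"
begin

definition simple_graph :: "'a set \<Rightarrow> ('a \<Rightarrow> 'a \<Rightarrow> bool) \<Rightarrow> bool" where
  "simple_graph V E \<longleftrightarrow> finite V \<and> (\<forall>x y. E x y \<longrightarrow> x \<in> V \<and> y \<in> V)
     \<and> (\<forall>x y. E x y \<longrightarrow> E y x) \<and> (\<forall>x. \<not> E x x)"

inductive walk :: "('a \<Rightarrow> 'a \<Rightarrow> bool) \<Rightarrow> nat \<Rightarrow> 'a \<Rightarrow> 'a \<Rightarrow> bool" for E where
  walk0: "walk E 0 x x"
| walkS: "E x y \<Longrightarrow> walk E n y z \<Longrightarrow> walk E (Suc n) x z"

definition connected_graph :: "'a set \<Rightarrow> ('a \<Rightarrow> 'a \<Rightarrow> bool) \<Rightarrow> bool" where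
  "connected_graph V E \<longleftrightarrow> (\<forall>x\<in>V. \<forall>y\<in>V. \<exists>n. walk E n x y)"

definition bipartite :: "'a set \<Rightarrow> ('a \<Rightarrow> 'a \<Rightarrow> bool) \<Rightarrow> bool" where
  "bipartite V E \<longleftrightarrow> (\<exists>A. A \<subseteq> V \<and> (\<forall>x y. E x y \<longrightarrow> (x \<in> A \<longleftrightarrow> y \<notin> A)))"

definition gdist :: "('a \<Rightarrow> 'a \<Rightarrow> bool) \<Rightarrow> 'a \<Rightarrow> 'a \<Rightarrow> nat" where
  "gdist E x y = (LEAST n. walk E n x y)"

definition deg :: "'a set \<Rightarrow> ('a \<Rightarrow> 'a \<Rightarrow> bool) \<Rightarrow> 'a \<Rightarrow> nat" where
  "deg V E x = card {y\<in>V. E x y}"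

definition walk_step :: "'a set \<Rightarrow> ('a \<Rightarrow> 'a \<Rightarrow> bool) \<Rightarrow> real \<Rightarrow> ('a \<Rightarrow> real) \<Rightarrow> ('a \<Rightarrow> real)" where
  "walk_step V E \<gamma> \<mu> = (\<lambda>w. \<gamma> * \<mu> w + (\<Sum>t\<in>{t\<in>V. E t w}. (1 - \<gamma>) / real (deg V E t) * \<mu> t))"

definition walk_dist :: "'a set \<Rightarrow> ('a \<Rightarrow> 'a \<Rightarrow> bool) \<Rightarrow> real \<Rightarrow> 'a \<Rightarrow> nat \<Rightarrow> ('a \<Rightarrow> real)" where
  "walk_dist V E \<gamma> w k = (walk_step V E \<gamma> ^^ k) (\<lambda>x. if x = w then 1 else 0)"

definition transport_plan :: "'a set \<Rightarrow> ('a \<Rightarrow> real) \<Rightarrow> ('a \<Rightarrow> real) \<Rightarrow> ('a \<Rightarrow> 'a \<Rightarrow> real) \<Rightarrow> bool" where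
  "transport_plan V \<mu> \<nu> T \<longleftrightarrow> (\<forall>a\<in>V. \<forall>b\<in>V. T a b \<ge> 0)
     \<and> (\<forall>a\<in>V. (\<Sum>b\<in>V. T a b) = \<mu> a) \<and> (\<forall>b\<in>V. (\<Sum>a\<in>V. T a b) = \<nu> b)"

definition wasserstein :: "'a set \<Rightarrow> ('a \<Rightarrow> 'a \<Rightarrow> bool) \<Rightarrow> ('a \<Rightarrow> real) \<Rightarrow> ('a \<Rightarrow> real) \<Rightarrow> real" where
  "wasserstein V E \<mu> \<nu> = Inf {(\<Sum>a\<in>V. \<Sum>b\<in>V. real (gdist E a b) * T a b) | T. transport_plan V \<mu> \<nu> T}"

end

theory Submission
  imports Defs
begin

locale grph =
  fixes V :: "'a set" and E :: "'a \<Rightarrow> 'a \<Rightarrow> bool"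
  assumes sg: "simple_graph V E" and nb: "\<And>a. a \<in> V \<Longrightarrow> \<exists>b. E a b"
begin

lemma finV: "finite V" using sg by (simp add: simple_graph_def)
lemma EV: "E x y \<Longrightarrow> x \<in> V \<and> y \<in> V" using sg by (simp add: simple_graph_def)
lemma Esym: "E x y \<Longrightarrow> E y x" using sg by (simp add: simple_graph_def)
lemma Eirr: "\<not> E x x" using sg by (simp add: simple_graph_def)

lemma deg_pos: "a \<in> V \<Longrightarrow> deg V E a > 0"
proof -
  assume "a \<in> V"
  then obtain b where "E a b" using nb by blast
  then have "b \<in> {y\<in>V. E a y}" using EV by auto
  then show ?thesis unfolding deg_def using finV by (metis (no_types, lifting) card_gt_0_iff empty_iff finite_subset mem_Collect_eq subsetI)
qed

lemma deg_le: "deg V E a \<le> card V"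
  unfolding deg_def using finV by (intro card_mono) auto

lemma deg_sym: "{t\<in>V. E t w} = {t\<in>V. E w t}" using Esym by blast

abbreviation P :: "real \<Rightarrow> ('a \<Rightarrow> real) \<Rightarrow> ('a \<Rightarrow> real)" where "P g \<equiv> walk_step V E g"

lemma step_lin: "P g (\<lambda>w. a * x w + b * y w) = (\<lambda>w. a * P g x w + b * P g y w)"
proof
  fix w
  have "(\<Sum>t\<in>{t\<in>V. E t w}. (1 - g) / real (deg V E t) * (a * x t + b * y t))
     = (\<Sum>t\<in>{t\<in>V. E t w}. a * ((1 - g) / real (deg V E t) * x t) + b * ((1 - g) / real (deg V E t) * y t))"
    by (rule sum.cong[OF refl]) (metis (no_types) distrib_left mult.left_commute)
  also have "\<dots> = a * (\<Sum>t\<in>{t\<in>V. E t w}. (1 - g) / real (deg V E t) * x t) + b * (\<Sum>t\<in>{t\<in>V. E t w}. (1 - g) / real (deg V E t) * y t)"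
    by (simp add: sum.distrib sum_distrib_left)
  finally show "P g (\<lambda>w. a * x w + b * y w) w = a * P g x w + b * P g y w"
    unfolding walk_step_def by (simp add: algebra_simps)
qed

lemma pow_lin: "(P g ^^ n) (\<lambda>w. a * x w + b * y w) = (\<lambda>w. a * (P g ^^ n) x w + b * (P g ^^ n) y w)"
  by (induction n) (auto simp: step_lin)

lemma pow_diff: "(P g ^^ n) (\<lambda>w. x w - y w) = (\<lambda>w. (P g ^^ n) x w - (P g ^^ n) y w)"
  using pow_lin[where a=1 and b="-1" and x=x and y=y and n=n and g=g] by simp

lemma step_pos: "0 \<le> g \<Longrightarrow> g \<le> 1 \<Longrightarrow> (\<And>w. 0 \<le> x w) \<Longrightarrow> 0 \<le> P g x w"
  unfolding walk_step_def by (intro add_nonneg_nonneg sum_nonneg mult_nonneg_nonneg divide_nonneg_nonneg) auto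

lemma pow_pos: "0 \<le> g \<Longrightarrow> g \<le> 1 \<Longrightarrow> (\<And>w. 0 \<le> x w) \<Longrightarrow> 0 \<le> (P g ^^ n) x w"
proof (induction n arbitrary: w)
  case (Suc n) then show ?case by (simp add: step_pos)
qed simp

lemma step_mass: "(\<Sum>w\<in>V. P g x w) = (\<Sum>w\<in>V. x w)"
proof -
  have "(\<Sum>w\<in>V. \<Sum>t\<in>{t\<in>V. E t w}. (1 - g) / real (deg V E t) * x t)
      = (\<Sum>t\<in>V. \<Sum>w\<in>{w\<in>V. E t w}. (1 - g) / real (deg V E t) * x t)"
    using sum.swap_restrict[OF finV finV, of "\<lambda>w t. (1 - g) / real (deg V E t) * x t" "\<lambda>w t. E t w"]
    by simp
  also have "\<dots> = (\<Sum>t\<in>V. (1 - g) * x t)"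
  proof (rule sum.cong[OF refl])
    fix t assume t: "t \<in> V"
    have "(\<Sum>w\<in>{w\<in>V. E t w}. (1 - g) / real (deg V E t) * x t) = real (deg V E t) * ((1 - g) / real (deg V E t) * x t)"
      by (simp add: deg_def)
    also have "\<dots> = (1 - g) * x t" using deg_pos[OF t] by simp
    finally show "(\<Sum>w\<in>{w\<in>V. E t w}. (1 - g) / real (deg V E t) * x t) = (1 - g) * x t" .
  qed
  moreover have "(\<Sum>w\<in>V. P g x w) = g * (\<Sum>w\<in>V. x w) + (\<Sum>w\<in>V. \<Sum>t\<in>{t\<in>V. E t w}. (1 - g) / real (deg V E t) * x t)"
    unfolding walk_step_def by (simp only: sum.distrib sum_distrib_left)
  moreover have "(\<Sum>t\<in>V. (1 - g) * x t) = (\<Sum>w\<in>V. x w) - g * (\<Sum>w\<in>V. x w)"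
    by (simp add: left_diff_distrib sum_subtractf sum_distrib_left)
  ultimately show ?thesis by linarith
qed

lemma pow_mass: "(\<Sum>w\<in>V. (P g ^^ n) x w) = (\<Sum>w\<in>V. x w)"
  by (induction n) (auto simp: step_mass)

definition pi :: "'a \<Rightarrow> real" where
  "pi w = real (deg V E w) / (\<Sum>t\<in>V. real (deg V E t))"

lemma pi_stat: "P g pi = pi"
proof
  fix w
  define D where "D = (\<Sum>t\<in>V. real (deg V E t))"
  have "(\<Sum>t\<in>{t\<in>V. E t w}. (1 - g) / real (deg V E t) * pi t) = (\<Sum>t\<in>{t\<in>V. E t w}. (1 - g) / D)"
    by (rule sum.cong) (use deg_pos in \<open>auto simp: pi_def D_def\<close>)
  also have "\<dots> = real (deg V E w) * ((1 - g) / D)"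
    by (simp add: deg_def deg_sym)
  finally show "P g pi w = pi w" unfolding walk_step_def pi_def D_def[symmetric]
    by (simp add: algebra_simps add_divide_distrib[symmetric])
qed

lemma pi_pow: "(P g ^^ n) pi = pi"
  by (induction n) (auto simp: pi_stat)

lemma pi_nonneg: "0 \<le> pi w" unfolding pi_def by (simp add: sum_nonneg)

lemma pi_mass: "V \<noteq> {} \<Longrightarrow> (\<Sum>w\<in>V. pi w) = 1"
proof -
  assume "V \<noteq> {}"
  then obtain a where "a \<in> V" by blast
  have "(\<Sum>t\<in>V. real (deg V E t)) > 0"
    using deg_pos[OF \<open>a \<in> V\<close>] \<open>a\<in>V\<close> finV
    by (metis (no_types, lifting) of_nat_0_less_iff of_nat_0_le_iff sum_pos2)
  then show ?thesis unfolding pi_def by (simp add: sum_divide_distrib[symmetric])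
qed

definition nrm :: "('a \<Rightarrow> real) \<Rightarrow> real" where
  "nrm x = (\<Sum>w\<in>V. \<bar>x w\<bar>)"

lemma nrm_nonneg: "0 \<le> nrm x" unfolding nrm_def by (simp add: sum_nonneg)

lemma pow_nonexp:
  assumes "0 \<le> g" "g \<le> 1"
  shows "nrm ((P g ^^ n) x) \<le> nrm x"
proof -
  have a: "0 \<le> (P g ^^ n) (\<lambda>w. 1 * \<bar>x w\<bar> + (-1) * x w) w" for w
    by (rule pow_pos[OF assms]) simp
  have b: "0 \<le> (P g ^^ n) (\<lambda>w. 1 * \<bar>x w\<bar> + 1 * x w) w" for w
    by (rule pow_pos[OF assms]) simp
  have c: "\<bar>(P g ^^ n) x w\<bar> \<le> (P g ^^ n) (\<lambda>w. \<bar>x w\<bar>) w" for w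
    using a[of w] b[of w] unfolding pow_lin by simp
  have "nrm ((P g ^^ n) x) \<le> (\<Sum>w\<in>V. (P g ^^ n) (\<lambda>w. \<bar>x w\<bar>) w)"
    unfolding nrm_def by (rule sum_mono) (rule c)
  also have "\<dots> = nrm x" unfolding pow_mass nrm_def ..
  finally show ?thesis .
qed

end


lemma walk_snoc: "walk R n a b \<Longrightarrow> R b c \<Longrightarrow> walk R (Suc n) a c"
  by (induction rule: walk.induct) (auto intro: walk.intros)

lemma walk_trans: "walk R n a b \<Longrightarrow> walk R k b c \<Longrightarrow> walk R (n + k) a c"
  by (induction rule: walk.induct) (auto intro: walk.intros)

lemma walk_mono: "walk R n a b \<Longrightarrow> (\<And>x y. R x y \<Longrightarrow> R' x y) \<Longrightarrow> walk R' n a b"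
  by (induction rule: walk.induct) (auto intro: walk.intros)

lemma walk_pad_refl: "(\<And>x. R x x) \<Longrightarrow> walk R n a b \<Longrightarrow> walk R (k + n) a b"
  by (induction k) (auto intro: walk.intros)

lemma walk_pad2: "R b c \<Longrightarrow> R c b \<Longrightarrow> walk R n a b \<Longrightarrow> walk R (n + 2 * k) a b"
proof (induction k)
  case (Suc k)
  then have "walk R (n + 2 * k) a b" by simp
  then have "walk R (Suc (Suc (n + 2 * k))) a b" using Suc.prems by (meson walk_snoc)
  then show ?case by simp
qed simp

lemma walk_pad_even: "R b c \<Longrightarrow> R c b \<Longrightarrow> walk R n a b \<Longrightarrow> n \<le> m \<Longrightarrow> even n = even m \<Longrightarrow> walk R m a b"
proof -
  assume a: "R b c" "R c b" "walk R n a b" "n \<le> m" "even n = even m"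
  then have "even (m - n)" by auto
  then obtain k where "m - n = 2 * k" by blast
  then have "m = n + 2 * k" using a(4) by simp
  then show ?thesis using walk_pad2[OF a(1-3)] by simp
qed

lemma walk0_eq: "walk R 0 a b \<Longrightarrow> a = b"
  by (auto elim: walk.cases)

lemma walk_parity:
  assumes bip: "\<And>x y. E x y \<Longrightarrow> (x \<in> A \<longleftrightarrow> y \<notin> A)"
  shows "walk E n x y \<Longrightarrow> (y \<in> A \<longleftrightarrow> (x \<in> A \<longleftrightarrow> even n))"
  by (induction rule: walk.induct) (auto dest: bip)

context grph begin

definition cc :: "real \<Rightarrow> real" where
  "cc g = (if g = 0 then 1 / real (card V) else min g ((1 - g) / real (card V)))"

lemma cardV_pos: "a \<in> V \<Longrightarrow> card V > 0"
  using finV card_gt_0_iff by blast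

lemma cc_pos: "a \<in> V \<Longrightarrow> 0 \<le> g \<Longrightarrow> g < 1 \<Longrightarrow> 0 < cc g"
  using cardV_pos[of a] unfolding cc_def by auto

lemma cc_le1: "a \<in> V \<Longrightarrow> 0 \<le> g \<Longrightarrow> g < 1 \<Longrightarrow> cc g \<le> 1"
proof -
  assume a: "a \<in> V" "0 \<le> g" "g < 1"
  have "real (card V) \<ge> 1" using cardV_pos[OF a(1)] by simp
  then have "1 / real (card V) \<le> 1" by simp
  then show ?thesis unfolding cc_def using a by auto
qed

lemma cc_le: "a \<in> V \<Longrightarrow> 0 \<le> g \<Longrightarrow> g < 1 \<Longrightarrow> cc g \<le> (1 - g) / real (card V)"
  unfolding cc_def by auto

lemma step_lb:
  assumes g: "0 \<le> g" "g < 1" and x: "\<And>w. 0 \<le> x w" and a: "a \<in> V"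
    and r: "E a y \<or> (a = y \<and> 0 < g)"
  shows "cc g * x a \<le> P g x y"
proof -
  have s0: "0 \<le> (\<Sum>t\<in>{t\<in>V. E t y}. (1 - g) / real (deg V E t) * x t)"
    using g x by (intro sum_nonneg mult_nonneg_nonneg divide_nonneg_nonneg) auto
  show ?thesis
  proof (cases "E a y")
    case True
    have "(1 - g) / real (deg V E a) * x a \<le> (\<Sum>t\<in>{t\<in>V. E t y}. (1 - g) / real (deg V E t) * x t)"
      using True a g x finV
      by (intro member_le_sum) (auto intro!: mult_nonneg_nonneg divide_nonneg_nonneg)
    moreover have "cc g \<le> (1 - g) / real (deg V E a)"
    proof -
      have "(1 - g) / real (card V) \<le> (1 - g) / real (deg V E a)"
        using deg_pos[OF a] deg_le[of a] g by (intro divide_left_mono) auto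
      then show ?thesis using cc_le[OF a g] by linarith
    qed
    then have "cc g * x a \<le> (1 - g) / real (deg V E a) * x a"
      using x by (intro mult_right_mono) auto
    moreover have "0 \<le> g * x y" using g x by simp
    ultimately show ?thesis unfolding walk_step_def by linarith
  next
    case False
    then have "a = y" "0 < g" using r by auto
    have "cc g \<le> g" unfolding cc_def using \<open>0 < g\<close> by auto
    then have "cc g * x a \<le> g * x a" using x[of a] by (rule mult_right_mono)
    then have "cc g * x a \<le> g * x y" using \<open>a = y\<close> by simp
    then show ?thesis unfolding walk_step_def using s0 by linarith
  qed
qed

lemma walk_lb:
  assumes "walk R n a b"
    and R: "\<And>x y. R x y \<Longrightarrow> E x y \<or> (x = y \<and> 0 < g)"
    and g: "0 \<le> g" "g < 1"
  shows "a \<in> V \<Longrightarrow> (\<And>w. 0 \<le> x w) \<Longrightarrow> cc g ^ n * x a \<le> (P g ^^ n) x b"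
  using assms(1)
proof (induction arbitrary: x rule: walk.induct)
  case (walk0 a)
  then show ?case by simp
next
  case (walkS a y n z)
  have yV: "y \<in> V" using R[OF walkS.hyps(1)] walkS.prems EV by auto
  have px: "\<And>w. 0 \<le> P g x w" using g walkS.prems by (intro step_pos) auto
  have "cc g ^ n * P g x y \<le> (P g ^^ n) (P g x) z"
    using walkS.IH[OF yV px] .
  moreover have "cc g * x a \<le> P g x y"
    by (rule step_lb[OF g]) (use walkS.prems R[OF walkS.hyps(1)] in auto)
  moreover have "0 \<le> cc g" using cc_pos[OF walkS.prems(1) g] by simp
  ultimately have "cc g ^ Suc n * x a \<le> (P g ^^ n) (P g x) z"
  proof -
    assume h: "cc g ^ n * P g x y \<le> (P g ^^ n) (P g x) z" "cc g * x a \<le> P g x y" "0 \<le> cc g"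
    have "cc g ^ Suc n * x a = cc g ^ n * (cc g * x a)" by (simp add: algebra_simps)
    also have "\<dots> \<le> cc g ^ n * P g x y" using h(2,3) by (intro mult_left_mono) auto
    finally show ?thesis using h(1) by linarith
  qed
  then show ?case by (simp only: funpow_Suc_right comp_apply)
qed

lemma contract:
  assumes g: "0 \<le> g" "g < 1"
    and R: "\<And>x y. R x y \<Longrightarrow> E x y \<or> (x = y \<and> 0 < g)"
    and S: "S \<subseteq> V" and b0: "b0 \<in> V" and wk: "\<And>a. a \<in> S \<Longrightarrow> walk R m a b0"
    and supp: "\<And>w. w \<in> V - S \<Longrightarrow> x w = 0" and mass: "(\<Sum>w\<in>V. x w) = 0"
  shows "nrm ((P g ^^ m) x) \<le> (1 - cc g ^ m / real (card V)) * nrm x"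
proof -
  define L where "L = P g ^^ m"
  define xp where "xp = (\<lambda>w. max (x w) 0)"
  define xn where "xn = (\<lambda>w. max (- x w) 0)"
  define d where "d = cc g ^ m / real (card V)"
  have xeq: "x = (\<lambda>w. 1 * xp w + (-1) * xn w)" unfolding xp_def xn_def by auto
  have Lx: "L x w = L xp w - L xn w" for w
    unfolding L_def by (subst xeq, subst pow_lin) simp
  have xp0: "0 \<le> xp w" "0 \<le> xn w" for w unfolding xp_def xn_def by auto
  have Lp0: "0 \<le> L xp w" "0 \<le> L xn w" for w
    unfolding L_def using xp0 g by (auto intro!: pow_pos)
  define hp where "hp = (\<Sum>w\<in>V. xp w)"
  define hn where "hn = (\<Sum>w\<in>V. xn w)"
  have "hp - hn = (\<Sum>w\<in>V. x w)" unfolding hp_def hn_def sum_subtractf[symmetric]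
    by (rule sum.cong) (auto simp: xp_def xn_def)
  then have hpn: "hp = hn" using mass by simp
  have nx: "nrm x = hp + hn" unfolding hp_def hn_def nrm_def sum.distrib[symmetric]
    by (rule sum.cong) (auto simp: xp_def xn_def)
  have cm: "0 \<le> cc g ^ m" using cc_pos[OF b0 g] by simp
  have cV: "real (card V) > 0" using cardV_pos[OF b0] by simp
  have key: "d * (\<Sum>w\<in>V. f w) \<le> L f b0"
    if f0: "\<And>w. 0 \<le> f w" and fs: "\<And>w. w \<in> V - S \<Longrightarrow> f w = 0" for f
  proof -
    have "\<And>a. a \<in> S \<Longrightarrow> cc g ^ m * f a \<le> L f b0"
      unfolding L_def using walk_lb[OF wk R g] S f0 by blast
    then have "(\<Sum>a\<in>S. cc g ^ m * f a) \<le> (\<Sum>a\<in>S. L f b0)" by (rule sum_mono)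
    also have "\<dots> = real (card S) * L f b0" by simp
    also have "\<dots> \<le> real (card V) * L f b0"
    proof (rule mult_right_mono)
      show "real (card S) \<le> real (card V)" using card_mono[OF finV S] by simp
      show "0 \<le> L f b0" unfolding L_def by (rule pow_pos) (use g f0 in auto)
    qed
    finally have "cc g ^ m * (\<Sum>a\<in>S. f a) \<le> real (card V) * L f b0"
      by (simp add: sum_distrib_left)
    moreover have "(\<Sum>a\<in>S. f a) = (\<Sum>a\<in>V. f a)"
      using fs S finV by (intro sum.mono_neutral_left) auto
    ultimately have "cc g ^ m * (\<Sum>a\<in>V. f a) \<le> real (card V) * L f b0" by simp
    then show ?thesis unfolding d_def using cV by (simp add: field_simps)
  qed
  have kp: "d * hp \<le> L xp b0" unfolding hp_def
    by (rule key) (auto simp: xp_def supp)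
  have kn: "d * hp \<le> L xn b0" unfolding hpn hn_def
    by (rule key) (auto simp: xn_def supp)
  have pw: "\<bar>L x w\<bar> \<le> L xp w + L xn w - (if w = b0 then 2 * (d * hp) else 0)" for w
    unfolding Lx using Lp0[of w] kp kn by (cases "w = b0") auto
  have "nrm (L x) \<le> (\<Sum>w\<in>V. L xp w + L xn w - (if w = b0 then 2 * (d * hp) else 0))"
    unfolding nrm_def by (rule sum_mono) (rule pw)
  also have "\<dots> = (\<Sum>w\<in>V. L xp w) + (\<Sum>w\<in>V. L xn w) - 2 * (d * hp)"
    using b0 finV by (simp add: sum.distrib sum_subtractf)
  also have "\<dots> = hp + hn - 2 * (d * hp)"
    unfolding L_def pow_mass hp_def hn_def ..
  also have "\<dots> = (1 - d) * nrm x" unfolding nx hpn by (simp add: algebra_simps)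
  finally show ?thesis unfolding L_def d_def .
qed

lemma conv:
  assumes g: "0 \<le> g" "g < 1"
    and R: "\<And>x y. R x y \<Longrightarrow> E x y \<or> (x = y \<and> 0 < g)"
    and S: "S \<subseteq> V" and b0: "b0 \<in> V" and wk: "\<And>a. a \<in> S \<Longrightarrow> walk R m a b0"
    and m: "0 < m"
    and inv: "\<And>y. (\<And>w. w \<in> V - S \<Longrightarrow> y w = 0) \<Longrightarrow> (\<And>w. w \<in> V - S \<Longrightarrow> (P g ^^ m) y w = 0)"
    and supp: "\<And>w. w \<in> V - S \<Longrightarrow> x w = 0" and mass: "(\<Sum>w\<in>V. x w) = 0"
  shows "(\<lambda>n. nrm ((P g ^^ n) x)) \<longlonglongrightarrow> 0"
proof -
  define d where "d = cc g ^ m / real (card V)"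
  have cV: "real (card V) \<ge> 1" using cardV_pos[OF b0] by simp
  have d0: "0 < d" unfolding d_def using cc_pos[OF b0 g] cV by simp
  have "cc g ^ m \<le> 1" using cc_pos[OF b0 g] cc_le1[OF b0 g] by (simp add: power_le_one)
  then have d1: "d \<le> 1" unfolding d_def using cV by (simp add: divide_le_eq)
  have it: "(\<forall>w\<in>V - S. ((P g ^^ m) ^^ j) x w = 0) \<and> (\<Sum>w\<in>V. ((P g ^^ m) ^^ j) x w) = 0
      \<and> nrm (((P g ^^ m) ^^ j) x) \<le> (1 - d) ^ j * nrm x" for j
  proof (induction j)
    case 0 then show ?case using supp mass by simp
  next
    case (Suc j)
    define y where "y = ((P g ^^ m) ^^ j) x"
    have ys: "\<And>w. w \<in> V - S \<Longrightarrow> y w = 0" and ym: "(\<Sum>w\<in>V. y w) = 0"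
      and yn: "nrm y \<le> (1 - d) ^ j * nrm x" using Suc unfolding y_def by auto
    have "nrm ((P g ^^ m) y) \<le> (1 - d) * nrm y"
      unfolding d_def by (rule contract[OF g R S b0 wk ys ym])
    also have "\<dots> \<le> (1 - d) * ((1 - d) ^ j * nrm x)"
      using yn d1 by (intro mult_left_mono) auto
    finally have "nrm ((P g ^^ m) y) \<le> (1 - d) ^ Suc j * nrm x" by simp
    moreover have "\<And>w. w \<in> V - S \<Longrightarrow> (P g ^^ m) y w = 0" by (rule inv) (rule ys)
    then have "\<forall>w\<in>V - S. (P g ^^ m) y w = 0" by blast
    moreover have "(\<Sum>w\<in>V. (P g ^^ m) y w) = 0" using ym pow_mass by simp
    ultimately show ?case unfolding y_def by simp
  qed
  have bnd: "nrm ((P g ^^ n) x) \<le> (1 - d) ^ (n div m) * nrm x" for n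
  proof -
    have "n = n mod m + m * (n div m)" by simp
    then have "(P g ^^ n) x = (P g ^^ (n mod m)) (((P g ^^ m) ^^ (n div m)) x)"
      by (metis comp_apply funpow_add funpow_mult)
    then have "nrm ((P g ^^ n) x) \<le> nrm (((P g ^^ m) ^^ (n div m)) x)"
      using pow_nonexp g by simp
    then show ?thesis using it[of "n div m"] by linarith
  qed
  have "(\<lambda>n. (1 - d) ^ (n div m)) \<longlonglongrightarrow> 0"
    using filterlim_compose[OF LIMSEQ_power_zero[of "1 - d"] filterlim_at_top_div_const_nat[OF m]]
    using d0 d1 by simp
  then have lim: "(\<lambda>n. (1 - d) ^ (n div m) * nrm x) \<longlonglongrightarrow> 0"
    by (simp add: tendsto_mult_left_zero)
  show ?thesis
    by (rule tendsto_sandwich[OF _ _ tendsto_const lim]) (auto simp: nrm_nonneg bnd)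
qed

end


locale cgrph = grph +
  assumes con: "connected_graph V E"
begin

lemma conw: "a \<in> V \<Longrightarrow> b \<in> V \<Longrightarrow> \<exists>n. walk E n a b"
  using con unfolding connected_graph_def by blast

lemma gdist_refl: "gdist E a a = 0"
  unfolding gdist_def by (rule Least_eq_0) (rule walk0)

lemma gdist_ge1: "a \<in> V \<Longrightarrow> b \<in> V \<Longrightarrow> a \<noteq> b \<Longrightarrow> 1 \<le> gdist E a b"
proof -
  assume a: "a \<in> V" "b \<in> V" "a \<noteq> b"
  have "walk E (gdist E a b) a b" unfolding gdist_def using conw[OF a(1,2)] by (rule LeastI_ex)
  then have "gdist E a b \<noteq> 0" using a(3) walk0_eq[of E a b] by (metis)
  then show ?thesis by simp
qed

definition cost :: "('a \<Rightarrow> 'a \<Rightarrow> real) \<Rightarrow> real" where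
  "cost T = (\<Sum>a\<in>V. \<Sum>b\<in>V. real (gdist E a b) * T a b)"

lemma W_eq: "wasserstein V E \<mu> \<nu> = Inf {cost T | T. transport_plan V \<mu> \<nu> T}"
  unfolding wasserstein_def cost_def ..

lemma cost_nonneg: "transport_plan V \<mu> \<nu> T \<Longrightarrow> 0 \<le> cost T"
  unfolding cost_def transport_plan_def by (auto intro!: sum_nonneg)

lemma bdd: "bdd_below {cost T | T. transport_plan V \<mu> \<nu> T}"
  by (rule bdd_belowI[where m=0]) (auto intro: cost_nonneg)

lemma prod_plan:
  assumes "\<And>w. w \<in> V \<Longrightarrow> 0 \<le> \<mu> w" "\<And>w. w \<in> V \<Longrightarrow> 0 \<le> \<nu> w"
    "(\<Sum>w\<in>V. \<mu> w) = 1" "(\<Sum>w\<in>V. \<nu> w) = 1"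
  shows "transport_plan V \<mu> \<nu> (\<lambda>a b. \<mu> a * \<nu> b)"
  unfolding transport_plan_def using assms
  by (auto simp: sum_distrib_left[symmetric] sum_distrib_right[symmetric])

lemma W_nonneg:
  assumes "\<And>w. w \<in> V \<Longrightarrow> 0 \<le> \<mu> w" "\<And>w. w \<in> V \<Longrightarrow> 0 \<le> \<nu> w"
    "(\<Sum>w\<in>V. \<mu> w) = 1" "(\<Sum>w\<in>V. \<nu> w) = 1"
  shows "0 \<le> wasserstein V E \<mu> \<nu>"
  unfolding W_eq using prod_plan[OF assms]
  by (intro cInf_greatest) (auto intro: cost_nonneg)

definition Dm :: real where "Dm = (\<Sum>a\<in>V. \<Sum>b\<in>V. real (gdist E a b))"

lemma Dm_ge: "a \<in> V \<Longrightarrow> b \<in> V \<Longrightarrow> real (gdist E a b) \<le> Dm"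
proof -
  assume a: "a \<in> V" "b \<in> V"
  have "real (gdist E a b) \<le> (\<Sum>b\<in>V. real (gdist E a b))"
    using a finV by (intro member_le_sum) auto
  also have "\<dots> \<le> Dm" unfolding Dm_def
    using a finV by (intro member_le_sum[where f="\<lambda>a. \<Sum>b\<in>V. real (gdist E a b)"]) (auto intro: sum_nonneg)
  finally show ?thesis .
qed

lemma Dm_nonneg: "0 \<le> Dm" unfolding Dm_def by (intro sum_nonneg) simp

lemma W_upper:
  assumes mu: "\<And>w. w \<in> V \<Longrightarrow> 0 \<le> \<mu> w" and nu: "\<And>w. w \<in> V \<Longrightarrow> 0 \<le> \<nu> w"
    and ms: "(\<Sum>w\<in>V. \<mu> w) = (\<Sum>w\<in>V. \<nu> w)"
  shows "wasserstein V E \<mu> \<nu> \<le> Dm * nrm (\<lambda>w. \<mu> w - \<nu> w)"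
proof -
  define m where "m = (\<lambda>a. min (\<mu> a) (\<nu> a))"
  define p where "p = (\<lambda>a. \<mu> a - m a)"
  define q where "q = (\<lambda>a. \<nu> a - m a)"
  define r where "r = (\<Sum>a\<in>V. p a)"
  define T where "T = (\<lambda>a b. (if a = b then m a else 0) + p a * q b / r)"
  have p0: "0 \<le> p a" and q0: "0 \<le> q a" for a unfolding p_def q_def m_def by auto
  have m0: "a \<in> V \<Longrightarrow> 0 \<le> m a" for a unfolding m_def using mu nu by auto
  have r0: "0 \<le> r" unfolding r_def using p0 by (simp add: sum_nonneg)
  have rq: "(\<Sum>a\<in>V. q a) = r" unfolding r_def p_def q_def using ms by (simp add: sum_subtractf)
  have pz: "r = 0 \<Longrightarrow> a \<in> V \<Longrightarrow> p a = 0" for a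
    using sum_nonneg_eq_0_iff[OF finV, of p] p0 unfolding r_def by blast
  have qz: "r = 0 \<Longrightarrow> a \<in> V \<Longrightarrow> q a = 0" for a
    using sum_nonneg_eq_0_iff[OF finV, of q] q0 rq by blast
  have plan: "transport_plan V \<mu> \<nu> T"
    unfolding transport_plan_def
  proof (intro conjI ballI)
    fix a b assume "a \<in> V" "b \<in> V"
    then show "0 \<le> T a b" unfolding T_def using m0 p0 q0 r0 by auto
  next
    fix a assume a: "a \<in> V"
    have "(\<Sum>b\<in>V. T a b) = m a + p a * (\<Sum>b\<in>V. q b) / r"
      unfolding T_def using a finV by (simp add: sum.distrib sum_distrib_left[symmetric] sum_divide_distrib[symmetric])
    also have "\<dots> = m a + p a" unfolding rq using pz[OF _ a] by (cases "r = 0") auto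
    finally show "(\<Sum>b\<in>V. T a b) = \<mu> a" unfolding p_def by simp
  next
    fix b assume b: "b \<in> V"
    have "(\<Sum>a\<in>V. T a b) = m b + (\<Sum>a\<in>V. p a) * q b / r"
      unfolding T_def using b finV by (simp add: sum.distrib sum_distrib_right[symmetric] sum_divide_distrib[symmetric])
    also have "\<dots> = m b + q b" unfolding r_def[symmetric] using qz[OF _ b] by (cases "r = 0") auto
    finally show "(\<Sum>a\<in>V. T a b) = \<nu> b" unfolding q_def by simp
  qed
  have pw: "real (gdist E a b) * T a b \<le> Dm * (p a * q b / r)" if "a \<in> V" "b \<in> V" for a b
  proof (cases "a = b")
    case True
    then show ?thesis using gdist_refl Dm_nonneg p0 q0 r0 by simp
  next
    case False
    then have "real (gdist E a b) * T a b = real (gdist E a b) * (p a * q b / r)" unfolding T_def by simp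
    also have "\<dots> \<le> Dm * (p a * q b / r)"
      using Dm_ge[OF that] p0 q0 r0 by (intro mult_right_mono) auto
    finally show ?thesis .
  qed
  have "cost T \<le> (\<Sum>a\<in>V. \<Sum>b\<in>V. Dm * (p a * q b / r))"
    unfolding cost_def by (intro sum_mono) (use pw in auto)
  also have "\<dots> \<le> (\<Sum>a\<in>V. Dm * p a)"
  proof (rule sum_mono)
    fix a assume "a \<in> V"
    have "(\<Sum>b\<in>V. Dm * (p a * q b / r)) = (\<Sum>b\<in>V. (Dm * p a / r) * q b)"
      by (rule sum.cong) (simp_all add: mult_ac)
    also have "\<dots> = Dm * p a / r * r" unfolding sum_distrib_left[symmetric] rq ..
    also have "\<dots> \<le> Dm * p a" using Dm_nonneg p0[of a] by (cases "r = 0") auto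
    finally show "(\<Sum>b\<in>V. Dm * (p a * q b / r)) \<le> Dm * p a" .
  qed
  also have "\<dots> = Dm * r" unfolding r_def by (simp add: sum_distrib_left)
  also have "\<dots> \<le> Dm * nrm (\<lambda>w. \<mu> w - \<nu> w)"
    unfolding r_def nrm_def using Dm_nonneg
    by (intro mult_left_mono sum_mono) (auto simp: p_def m_def)
  finally have "cost T \<le> Dm * nrm (\<lambda>w. \<mu> w - \<nu> w)" .
  moreover have "wasserstein V E \<mu> \<nu> \<le> cost T"
    unfolding W_eq by (rule cInf_lower) (use plan bdd in auto)
  ultimately show ?thesis by linarith
qed

lemma split_diag: "a \<in> V \<Longrightarrow> (\<Sum>b\<in>V. f b) = f a + (\<Sum>b\<in>V. if a = b then 0 else f b)"
proof -
  assume a: "a \<in> V"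
  have "(\<Sum>b\<in>V. f b) = (\<Sum>b\<in>V. (if a = b then f b else 0) + (if a = b then 0 else f b))"
    by (rule sum.cong) auto
  also have "\<dots> = f a + (\<Sum>b\<in>V. if a = b then 0 else f b)"
    using a finV by (simp add: sum.distrib)
  finally show ?thesis .
qed

lemma W_lower:
  assumes mu: "\<And>w. w \<in> V \<Longrightarrow> 0 \<le> \<mu> w" and nu: "\<And>w. w \<in> V \<Longrightarrow> 0 \<le> \<nu> w"
    and m1: "(\<Sum>w\<in>V. \<mu> w) = 1" and n1: "(\<Sum>w\<in>V. \<nu> w) = 1" and S: "S \<subseteq> V"
  shows "\<bar>(\<Sum>w\<in>S. \<mu> w) - (\<Sum>w\<in>S. \<nu> w)\<bar> \<le> wasserstein V E \<mu> \<nu>"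
  unfolding W_eq
proof (rule cInf_greatest)
  show "{cost T |T. transport_plan V \<mu> \<nu> T} \<noteq> {}" using prod_plan[OF mu nu m1 n1] by blast
next
  fix c assume "c \<in> {cost T |T. transport_plan V \<mu> \<nu> T}"
  then obtain T where T: "transport_plan V \<mu> \<nu> T" and c: "c = cost T" by blast
  have T0: "a \<in> V \<Longrightarrow> b \<in> V \<Longrightarrow> 0 \<le> T a b" for a b using T unfolding transport_plan_def by auto
  have rows: "a \<in> V \<Longrightarrow> (\<Sum>b\<in>V. T a b) = \<mu> a" for a using T unfolding transport_plan_def by auto
  have cols: "b \<in> V \<Longrightarrow> (\<Sum>a\<in>V. T a b) = \<nu> b" for b using T unfolding transport_plan_def by auto
  define off where "off = (\<Sum>a\<in>V. \<Sum>b\<in>V. if a = b then 0 else T a b)"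
  have offc: "off \<le> cost T" unfolding off_def cost_def
  proof (intro sum_mono)
    fix a b assume ab: "a \<in> V" "b \<in> V"
    show "(if a = b then 0 else T a b) \<le> real (gdist E a b) * T a b"
    proof (cases "a = b")
      case False
      have "1 * T a b \<le> real (gdist E a b) * T a b"
        using gdist_ge1[OF ab False] T0[OF ab] by (intro mult_right_mono) auto
      then show ?thesis using False by simp
    qed (use T0 ab in auto)
  qed
  have off0: "\<And>a b. 0 \<le> (if a = b then 0 else T a b) \<or> a \<notin> V \<or> b \<notin> V" using T0 by auto
  have smu: "(\<Sum>w\<in>S. \<mu> w) = (\<Sum>a\<in>S. T a a) + (\<Sum>a\<in>S. \<Sum>b\<in>V. if a = b then 0 else T a b)"
    unfolding sum.distrib[symmetric] using S by (intro sum.cong) (auto simp: rows[symmetric] intro!: split_diag)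
  have snu: "(\<Sum>w\<in>S. \<nu> w) = (\<Sum>a\<in>S. T a a) + (\<Sum>b\<in>S. \<Sum>a\<in>V. if a = b then 0 else T a b)"
    unfolding sum.distrib[symmetric] using S
    by (intro sum.cong) (auto simp: cols[symmetric] intro!: split_diag[where f="\<lambda>a. T a _", simplified eq_commute])
  have A: "(\<Sum>a\<in>S. \<Sum>b\<in>V. if a = b then 0 else T a b) \<le> off"
    unfolding off_def using S finV T0
    by (intro sum_mono2) (auto intro!: sum_nonneg)
  have "(\<Sum>b\<in>S. \<Sum>a\<in>V. if a = b then 0 else T a b) \<le> (\<Sum>b\<in>V. \<Sum>a\<in>V. if a = b then 0 else T a b)"
    using S finV T0 by (intro sum_mono2) (auto intro!: sum_nonneg)
  also have "\<dots> = off" unfolding off_def by (rule sum.swap)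
  finally have B: "(\<Sum>b\<in>S. \<Sum>a\<in>V. if a = b then 0 else T a b) \<le> off" .
  have Ap: "0 \<le> (\<Sum>a\<in>S. \<Sum>b\<in>V. if a = b then 0 else T a b)"
    using S T0 by (intro sum_nonneg) auto
  have Bp: "0 \<le> (\<Sum>b\<in>S. \<Sum>a\<in>V. if a = b then 0 else T a b)"
    using S T0 by (intro sum_nonneg) auto
  show "\<bar>(\<Sum>w\<in>S. \<mu> w) - (\<Sum>w\<in>S. \<nu> w)\<bar> \<le> c"
    unfolding c smu snu using A B Ap Bp offc by linarith
qed

end


context cgrph begin

abbreviation dl :: "'a \<Rightarrow> 'a \<Rightarrow> real" where "dl u \<equiv> (\<lambda>x. if x = u then 1 else 0)"

lemma wd_eq: "walk_dist V E g u n = (P g ^^ n) (dl u)"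
  unfolding walk_dist_def ..

lemma wd_nonneg: "0 \<le> g \<Longrightarrow> g \<le> 1 \<Longrightarrow> 0 \<le> walk_dist V E g u n w"
  unfolding wd_eq by (rule pow_pos) auto

lemma wd_mass: "u \<in> V \<Longrightarrow> (\<Sum>w\<in>V. walk_dist V E g u n w) = 1"
  unfolding wd_eq pow_mass using finV by simp

lemma W_conv:
  assumes "0 \<le> a" "a \<le> 1" "0 \<le> b" "b \<le> 1" "u \<in> V" "v \<in> V"
    and lim: "(\<lambda>n. nrm (\<lambda>w. walk_dist V E a u n w - walk_dist V E b v n w)) \<longlonglongrightarrow> 0"
  shows "(\<lambda>n. wasserstein V E (walk_dist V E a u n) (walk_dist V E b v n)) \<longlonglongrightarrow> 0"
proof (rule tendsto_sandwich[OF _ _ tendsto_const])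
  show "\<forall>\<^sub>F n in sequentially. 0 \<le> wasserstein V E (walk_dist V E a u n) (walk_dist V E b v n)"
  proof (intro always_eventually allI)
    fix n show "0 \<le> wasserstein V E (walk_dist V E a u n) (walk_dist V E b v n)"
      by (rule W_nonneg) (use assms wd_nonneg wd_mass in auto)
  qed
  show "\<forall>\<^sub>F n in sequentially. wasserstein V E (walk_dist V E a u n) (walk_dist V E b v n)
      \<le> Dm * nrm (\<lambda>w. walk_dist V E a u n w - walk_dist V E b v n w)"
  proof (intro always_eventually allI)
    fix n show "wasserstein V E (walk_dist V E a u n) (walk_dist V E b v n)
      \<le> Dm * nrm (\<lambda>w. walk_dist V E a u n w - walk_dist V E b v n w)"
      by (rule W_upper) (use assms wd_nonneg wd_mass in auto)
  qed
  show "(\<lambda>n. Dm * nrm (\<lambda>w. walk_dist V E a u n w - walk_dist V E b v n w)) \<longlonglongrightarrow> 0"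
    using tendsto_mult_right_zero[OF lim] by simp
qed

lemma nonbip_walks:
  assumes nb: "\<not> bipartite V E" and u: "u \<in> V" and a: "a \<in> V"
  shows "\<exists>n1 n2. even n1 \<and> odd n2 \<and> walk E n1 a u \<and> walk E n2 a u"
proof -
  have "\<exists>c\<in>V. (\<exists>n. even n \<and> walk E n c u) \<and> (\<exists>n. odd n \<and> walk E n c u)"
  proof (rule ccontr)
    assume H: "\<not> ?thesis"
    define A where "A = {x\<in>V. \<exists>n. even n \<and> walk E n x u}"
    have "bipartite V E" unfolding bipartite_def
    proof (intro exI conjI allI impI)
      show "A \<subseteq> V" unfolding A_def by auto
      fix x y assume e: "E x y"
      have xV: "x \<in> V" and yV: "y \<in> V" using EV[OF e] by auto
      have e': "E y x" using Esym[OF e] .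
      show "x \<in> A \<longleftrightarrow> y \<notin> A"
      proof
        assume "x \<in> A"
        then obtain n where "even n" "walk E n x u" unfolding A_def by auto
        then have "odd (Suc n)" "walk E (Suc n) y u" using e' by (auto intro: walk.intros)
        then show "y \<notin> A" using H yV unfolding A_def by blast
      next
        assume "y \<notin> A"
        obtain n where n: "walk E n y u" using conw[OF yV u] by blast
        then have "odd n" using \<open>y \<notin> A\<close> yV unfolding A_def by blast
        then have "even (Suc n)" "walk E (Suc n) x u" using e n by (auto intro: walk.intros)
        then show "x \<in> A" using xV unfolding A_def by blast
      qed
    qed
    then show False using nb by simp
  qed
  then obtain c e1 o1 where c: "c \<in> V" "even e1" "walk E e1 c u" "odd o1" "walk E o1 c u" by blast
  obtain l where l: "walk E l a c" using conw[OF a c(1)] by blast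
  have w1: "walk E (l + e1) a u" "walk E (l + o1) a u" using walk_trans[OF l c(3)] walk_trans[OF l c(5)] by auto
  show ?thesis
  proof (cases "even l")
    case True
    then show ?thesis using w1 c by (intro exI[of _ "l + e1"] exI[of _ "l + o1"]) auto
  next
    case False
    then show ?thesis using w1 c by (intro exI[of _ "l + o1"] exI[of _ "l + e1"]) auto
  qed
qed

lemma conv_pi:
  assumes g: "0 \<le> g" "g < 1" and h: "0 < g \<or> \<not> bipartite V E" and u: "u \<in> V"
  shows "(\<lambda>n. nrm (\<lambda>w. walk_dist V E g u n w - pi w)) \<longlonglongrightarrow> 0"
proof -
  define x0 where "x0 = (\<lambda>w. dl u w - pi w)"
  have eq: "(\<lambda>w. walk_dist V E g u n w - pi w) = (P g ^^ n) x0" for n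
    unfolding x0_def pow_diff pi_pow wd_eq ..
  have mass: "(\<Sum>w\<in>V. x0 w) = 0"
    unfolding x0_def using pi_mass u finV by (auto simp: sum_subtractf)
  obtain c where uc: "E u c" using nb[OF u] by blast
  have mass': "\<And>w. w \<in> V - V \<Longrightarrow> x0 w = 0" by simp
  have inv': "\<And>y m. (\<And>w. w \<in> V - V \<Longrightarrow> y w = 0) \<Longrightarrow> (\<And>w. w \<in> V - V \<Longrightarrow> (P g ^^ m) y w = 0)" by simp
  have "(\<lambda>n. nrm ((P g ^^ n) x0)) \<longlonglongrightarrow> 0"
  proof (cases "0 < g")
    case True
    define R where "R = (\<lambda>x y. E x y \<or> x = y)"
    have R: "\<And>x y. R x y \<Longrightarrow> E x y \<or> (x = y \<and> 0 < g)" unfolding R_def using True by auto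
    have "\<forall>a\<in>V. \<exists>n. walk E n a u" using conw u by blast
    from bchoice[OF this] obtain f where f0: "\<forall>a\<in>V. walk E (f a) a u" by (elim exE)
    then have f: "\<And>a. a \<in> V \<Longrightarrow> walk E (f a) a u" by blast
    define m where "m = (\<Sum>a\<in>V. f a) + 1"
    have wk: "walk R m a u" if a: "a \<in> V" for a
    proof -
      have fa: "f a \<le> (\<Sum>a\<in>V. f a)" using a finV by (intro member_le_sum) auto
      have "walk R (f a) a u" by (rule walk_mono[OF f[OF a]]) (simp add: R_def)
      then have "walk R ((m - f a) + f a) a u" by (rule walk_pad_refl[rotated]) (simp add: R_def)
      then show ?thesis using fa unfolding m_def by simp
    qed
    have m: "0 < m" unfolding m_def by simp
    show ?thesis by (rule conv[OF g R order_refl u wk m inv' mass' mass])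
  next
    case False
    then have nbp: "\<not> bipartite V E" using h by auto
    have "\<forall>a\<in>V. \<exists>n1. even n1 \<and> walk E n1 a u"
      using nonbip_walks[OF nbp u] by blast
    from bchoice[OF this] obtain f1 where f0: "\<forall>a\<in>V. even (f1 a) \<and> walk E (f1 a) a u" by (elim exE)
    then have f: "\<And>a. a \<in> V \<Longrightarrow> even (f1 a) \<and> walk E (f1 a) a u" by blast
    define m where "m = 2 * (\<Sum>a\<in>V. f1 a) + 2"
    have wk: "walk E m a u" if a: "a \<in> V" for a
    proof -
      have fa: "f1 a \<le> (\<Sum>a\<in>V. f1 a)" using a finV by (intro member_le_sum) auto
      have "even (f1 a)" "walk E (f1 a) a u" using f[OF a] by auto
      moreover have "f1 a \<le> m" using fa unfolding m_def by simp
      moreover have "even m" unfolding m_def by simp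
      ultimately show ?thesis using walk_pad_even[of E u c "f1 a" a m, OF uc Esym[OF uc]] by simp
    qed
    have R: "\<And>x y. E x y \<Longrightarrow> E x y \<or> (x = y \<and> 0 < g)" by simp
    have m: "0 < m" unfolding m_def by simp
    show ?thesis by (rule conv[OF g R order_refl u wk m inv' mass' mass])
  qed
  then show ?thesis unfolding eq .
qed

lemma nrm_tri: "nrm (\<lambda>w. x w - y w) \<le> nrm (\<lambda>w. x w - z w) + nrm (\<lambda>w. y w - z w)"
  unfolding nrm_def sum.distrib[symmetric] by (rule sum_mono) linarith

lemma nrm_conv2:
  assumes "(\<lambda>n. nrm (\<lambda>w. x n w - z w)) \<longlonglongrightarrow> 0" "(\<lambda>n. nrm (\<lambda>w. y n w - z w)) \<longlonglongrightarrow> 0"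
  shows "(\<lambda>n. nrm (\<lambda>w. x n w - y n w)) \<longlonglongrightarrow> 0"
  by (rule tendsto_sandwich[OF _ _ tendsto_const tendsto_add_zero[OF assms]])
     (auto simp: nrm_nonneg nrm_tri)


definition Zs :: "'a set \<Rightarrow> bool \<Rightarrow> ('a \<Rightarrow> real) \<Rightarrow> bool" where
  "Zs A B x \<longleftrightarrow> (\<forall>w\<in>V. (w \<in> A \<longleftrightarrow> B) \<longrightarrow> x w = 0)"

lemma Zstep:
  assumes bip: "\<And>x y. E x y \<Longrightarrow> (x \<in> A \<longleftrightarrow> y \<notin> A)" and Z: "Zs A B x"
  shows "Zs A (\<not> B) (P 0 x)"
  unfolding Zs_def
proof (intro ballI impI)
  fix w assume w: "w \<in> V" "(w \<in> A) = (\<not> B)"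
  have "(\<Sum>t\<in>{t\<in>V. E t w}. (1 - 0) / real (deg V E t) * x t) = 0"
  proof (rule sum.neutral, rule ballI)
    fix t assume t: "t \<in> {t\<in>V. E t w}"
    then have "(t \<in> A) = B" using bip[of t w] w by auto
    then have "x t = 0" using Z t unfolding Zs_def by auto
    then show "(1 - 0) / real (deg V E t) * x t = 0" by simp
  qed
  then show "P 0 x w = 0" unfolding walk_step_def by simp
qed

lemma Zpow:
  assumes bip: "\<And>x y. E x y \<Longrightarrow> (x \<in> A \<longleftrightarrow> y \<notin> A)" and Z: "Zs A B x"
  shows "Zs A (if even n then B else \<not> B) ((P 0 ^^ n) x)"
proof (induction n)
  case 0 then show ?case using Z by simp
next
  case (Suc n)
  have "Zs A (\<not> (if even n then B else \<not> B)) (P 0 ((P 0 ^^ n) x))"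
    by (rule Zstep[OF bip Suc])
  moreover have "(\<not> (if even n then B else \<not> B)) = (if even (Suc n) then B else \<not> B)" by simp
  ultimately show ?case by simp
qed

lemma sumA:
  assumes A: "A \<subseteq> V" and Z: "Zs A B x"
  shows "(\<Sum>w\<in>A. x w) = (if B then 0 else (\<Sum>w\<in>V. x w))"
proof (cases B)
  case True
  then show ?thesis using Z A unfolding Zs_def by (auto intro!: sum.neutral)
next
  case False
  then have "(\<Sum>w\<in>A. x w) = (\<Sum>w\<in>V. x w)"
    using Z A finV unfolding Zs_def by (intro sum.mono_neutral_left) auto
  then show ?thesis using False by simp
qed

lemma Zdl: "Zs A (u \<notin> A) (dl u)"
  unfolding Zs_def by auto

lemma wd0_A:
  assumes bip: "\<And>x y. E x y \<Longrightarrow> (x \<in> A \<longleftrightarrow> y \<notin> A)" and A: "A \<subseteq> V" and u: "u \<in> V"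
  shows "(\<Sum>w\<in>A. walk_dist V E 0 u n w) = (if (even n \<longleftrightarrow> u \<in> A) then 1 else 0)"
proof -
  have "Zs A (if even n then u \<notin> A else \<not> (u \<notin> A)) (walk_dist V E 0 u n)"
    unfolding wd_eq by (rule Zpow[OF bip Zdl])
  from sumA[OF A this] show ?thesis using wd_mass[OF u] by auto
qed

lemma bip_conv:
  assumes bip: "\<And>x y. E x y \<Longrightarrow> (x \<in> A \<longleftrightarrow> y \<notin> A)" and A: "A \<subseteq> V"
    and u: "u \<in> V" and v: "v \<in> V" and ev: "even l" "walk E l u v"
  shows "(\<lambda>n. nrm (\<lambda>w. walk_dist V E 0 u n w - walk_dist V E 0 v n w)) \<longlonglongrightarrow> 0"
proof -
  define x0 where "x0 = (\<lambda>w. dl u w - dl v w)"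
  have eq: "(\<lambda>w. walk_dist V E 0 u n w - walk_dist V E 0 v n w) = (P 0 ^^ n) x0" for n
    unfolding x0_def pow_diff wd_eq ..
  define S where "S = {w\<in>V. (w \<in> A) = (u \<in> A)}"
  have SV: "S \<subseteq> V" unfolding S_def by auto
  have vS: "v \<in> S" using walk_parity[OF bip ev(2)] ev(1) v unfolding S_def by auto
  have uS: "u \<in> S" using u unfolding S_def by auto
  have "\<forall>a\<in>S. \<exists>n. even n \<and> walk E n a u"
  proof
    fix a assume a: "a \<in> S"
    obtain n where n: "walk E n a u" using conw a u SV by blast
    have "even n" using walk_parity[OF bip n] a unfolding S_def by auto
    then show "\<exists>n. even n \<and> walk E n a u" using n by blast
  qed
  from bchoice[OF this] obtain f where f0: "\<forall>a\<in>S. even (f a) \<and> walk E (f a) a u" by (elim exE)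
  obtain c where uc: "E u c" using nb[OF u] by blast
  have finS: "finite S" using finite_subset[OF SV finV] .
  define m where "m = 2 * (\<Sum>a\<in>S. f a) + 2"
  have wk: "walk E m a u" if a: "a \<in> S" for a
  proof -
    have fa: "f a \<le> (\<Sum>a\<in>S. f a)" using a finS by (intro member_le_sum) auto
    have "even (f a)" "walk E (f a) a u" using f0 a by auto
    moreover have "f a \<le> m" using fa unfolding m_def by simp
    moreover have "even m" unfolding m_def by simp
    ultimately show ?thesis using walk_pad_even[of E u c "f a" a m, OF uc Esym[OF uc]] by simp
  qed
  have m: "0 < m" unfolding m_def by simp
  have R: "\<And>x y. E x y \<Longrightarrow> E x y \<or> (x = y \<and> 0 < (0::real))" by simp
  have VS: "w \<in> V - S \<longleftrightarrow> w \<in> V \<and> (w \<in> A \<longleftrightarrow> u \<notin> A)" for w unfolding S_def by auto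
  have inv: "\<And>w. w \<in> V - S \<Longrightarrow> (P 0 ^^ m) y w = 0"
    if y: "\<And>w. w \<in> V - S \<Longrightarrow> y w = 0" for y
  proof -
    have "Zs A (u \<notin> A) y" unfolding Zs_def using y VS by auto
    then have "Zs A (if even m then u \<notin> A else \<not> (u \<notin> A)) ((P 0 ^^ m) y)" using Zpow[OF bip, of "u \<notin> A" y m] by blast
    then have "Zs A (u \<notin> A) ((P 0 ^^ m) y)" unfolding m_def by simp
    then show "\<And>w. w \<in> V - S \<Longrightarrow> (P 0 ^^ m) y w = 0" unfolding Zs_def using VS by auto
  qed
  have supp: "\<And>w. w \<in> V - S \<Longrightarrow> x0 w = 0" unfolding x0_def using uS vS by auto
  have mass: "(\<Sum>w\<in>V. x0 w) = 0" unfolding x0_def using u v finV by (simp add: sum_subtractf)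
  have "(\<lambda>n. nrm ((P 0 ^^ n) x0)) \<longlonglongrightarrow> 0"
    by (rule conv[OF _ _ R SV u wk m inv supp mass]) auto
  then show ?thesis unfolding eq .
qed

lemma P1_id: "P 1 x = x"
  unfolding walk_step_def by simp

lemma wd1: "walk_dist V E 1 u n = dl u"
  unfolding wd_eq by (induction n) (auto simp: P1_id)

lemma not_tends:
  assumes "\<And>n. c \<le> X n" "0 < c"
  shows "\<not> X \<longlonglongrightarrow> (0::real)"
proof
  assume "X \<longlonglongrightarrow> 0"
  then have "c \<le> 0" by (rule LIMSEQ_le_const) (use assms in auto)
  then show False using assms by simp
qed

lemma necA:
  assumes u: "u \<in> V" and v: "v \<in> V" and uv: "u \<noteq> v"
  shows "\<not> (\<lambda>n. wasserstein V E (walk_dist V E 1 u n) (walk_dist V E 1 v n)) \<longlonglongrightarrow> 0"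
proof (rule not_tends)
  fix n
  have "\<bar>(\<Sum>w\<in>{u}. dl u w) - (\<Sum>w\<in>{u}. dl v w)\<bar> \<le> wasserstein V E (dl u) (dl v)"
    by (rule W_lower) (use u v finV in auto)
  then show "1 \<le> wasserstein V E (walk_dist V E 1 u n) (walk_dist V E 1 v n)"
    unfolding wd1 using uv by simp
qed simp

lemma rec_ub:
  assumes g: "0 \<le> g" "g \<le> 1" and x: "\<And>w. 0 \<le> x w" and m: "(\<Sum>w\<in>V. x w) = 1" and v: "v \<in> V"
  shows "P g x v \<le> g * x v + (1 - g) * (1 - x v)"
proof -
  have "(\<Sum>t\<in>{t\<in>V. E t v}. (1 - g) / real (deg V E t) * x t) \<le> (\<Sum>t\<in>{t\<in>V. E t v}. (1 - g) * x t)"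
  proof (rule sum_mono)
    fix t assume t: "t \<in> {t\<in>V. E t v}"
    have "1 \<le> real (deg V E t)" using deg_pos[of t] t by auto
    then have "(1 - g) / real (deg V E t) \<le> (1 - g) / 1" using g by (intro divide_left_mono) auto
    then have "(1 - g) / real (deg V E t) \<le> (1 - g)" by simp
    then show "(1 - g) / real (deg V E t) * x t \<le> (1 - g) * x t" using x by (rule mult_right_mono)
  qed
  also have "\<dots> \<le> (\<Sum>t\<in>V - {v}. (1 - g) * x t)"
    using finV Eirr x g by (intro sum_mono2) auto
  also have "\<dots> = (1 - g) * (1 - x v)"
    using m v finV by (simp add: sum_distrib_left[symmetric] sum_diff1)
  finally show ?thesis unfolding walk_step_def by simp
qed

lemma necB:
  assumes a: "0 \<le> \<alpha>" "\<alpha> < 1" and u: "u \<in> V" and v: "v \<in> V"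
  shows "\<not> (\<lambda>n. wasserstein V E (walk_dist V E \<alpha> u n) (walk_dist V E 1 v n)) \<longlonglongrightarrow> 0"
proof
  assume lim: "(\<lambda>n. wasserstein V E (walk_dist V E \<alpha> u n) (walk_dist V E 1 v n)) \<longlonglongrightarrow> 0"
  define s where "s n = walk_dist V E \<alpha> u n v" for n
  have lb: "\<bar>s n - 1\<bar> \<le> wasserstein V E (walk_dist V E \<alpha> u n) (walk_dist V E 1 v n)" for n
  proof -
    have "\<bar>(\<Sum>w\<in>{v}. walk_dist V E \<alpha> u n w) - (\<Sum>w\<in>{v}. walk_dist V E 1 v n w)\<bar>
        \<le> wasserstein V E (walk_dist V E \<alpha> u n) (walk_dist V E 1 v n)"
      by (rule W_lower) (use u v a wd_nonneg wd_mass in auto)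
    then show ?thesis unfolding wd1 s_def by simp
  qed
  have "(\<lambda>n. \<bar>s n - 1\<bar>) \<longlonglongrightarrow> 0"
    by (rule tendsto_sandwich[OF _ _ tendsto_const lim]) (auto simp: lb)
  then have s1: "s \<longlonglongrightarrow> 1" by (simp add: tendsto_rabs_zero_iff LIM_zero_iff)
  then have s1': "(\<lambda>n. s (Suc n)) \<longlonglongrightarrow> 1" by (rule LIMSEQ_Suc)
  have rhs: "(\<lambda>n. \<alpha> * s n + (1 - \<alpha>) * (1 - s n)) \<longlonglongrightarrow> \<alpha> * 1 + (1 - \<alpha>) * (1 - 1)"
    by (intro tendsto_intros s1)
  have le: "s (Suc n) \<le> \<alpha> * s n + (1 - \<alpha>) * (1 - s n)" for n
    unfolding s_def wd_eq funpow.simps comp_apply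
    by (rule rec_ub) (use a u v pow_pos pow_mass finV in auto)
  have "1 \<le> \<alpha> * 1 + (1 - \<alpha>) * (1 - 1)"
    by (rule LIMSEQ_le[OF s1' rhs]) (use le in auto)
  then show False using a by simp
qed

lemma step_ge: "0 \<le> g \<Longrightarrow> g \<le> 1 \<Longrightarrow> (\<And>w. 0 \<le> x w) \<Longrightarrow> g * x w \<le> P g x w"
  unfolding walk_step_def by (auto intro!: sum_nonneg mult_nonneg_nonneg divide_nonneg_nonneg)

lemma necC:
  assumes bip: "\<And>x y. E x y \<Longrightarrow> (x \<in> A \<longleftrightarrow> y \<notin> A)" and A: "A \<subseteq> V"
    and b: "0 < \<beta>" "\<beta> < 1" and u: "u \<in> V" and v: "v \<in> V"
  shows "\<not> (\<lambda>n. wasserstein V E (walk_dist V E 0 u n) (walk_dist V E \<beta> v n)) \<longlonglongrightarrow> 0"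
proof
  assume lim: "(\<lambda>n. wasserstein V E (walk_dist V E 0 u n) (walk_dist V E \<beta> v n)) \<longlonglongrightarrow> 0"
  define s where "s n = (\<Sum>w\<in>A. walk_dist V E \<beta> v n w)" for n
  have lb: "\<bar>(if (even n \<longleftrightarrow> u \<in> A) then 1 else 0) - s n\<bar> \<le> wasserstein V E (walk_dist V E 0 u n) (walk_dist V E \<beta> v n)" for n
  proof -
    have "\<bar>(\<Sum>w\<in>A. walk_dist V E 0 u n w) - (\<Sum>w\<in>A. walk_dist V E \<beta> v n w)\<bar>
        \<le> wasserstein V E (walk_dist V E 0 u n) (walk_dist V E \<beta> v n)"
      by (rule W_lower) (use u v b A wd_nonneg wd_mass in auto)
    then show ?thesis unfolding s_def using wd0_A[OF bip A u, of n] by simp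
  qed
  have rec: "\<beta> * s n \<le> s (Suc n)" for n
  proof -
    have "\<beta> * s n = (\<Sum>w\<in>A. \<beta> * walk_dist V E \<beta> v n w)" unfolding s_def by (simp add: sum_distrib_left)
    also have "\<dots> \<le> (\<Sum>w\<in>A. P \<beta> (walk_dist V E \<beta> v n) w)"
      by (rule sum_mono, rule step_ge) (use b wd_nonneg in auto)
    finally show ?thesis unfolding s_def wd_eq by simp
  qed
  obtain N where N: "\<And>n. n \<ge> N \<Longrightarrow> norm (wasserstein V E (walk_dist V E 0 u n) (walk_dist V E \<beta> v n) - 0) < \<beta> / 4"
    using LIMSEQ_D[OF lim, of "\<beta> / 4"] b by auto
  define n where "n = 2 * N + (if u \<in> A then 0 else 1)"
  have n1: "(even n \<longleftrightarrow> u \<in> A)" unfolding n_def by auto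
  have n2: "\<not> (even (Suc n) \<longleftrightarrow> u \<in> A)" using n1 by auto
  have "\<bar>1 - s n\<bar> < \<beta> / 4" using lb[of n] N[of n] n1 unfolding n_def by auto
  moreover have "\<bar>0 - s (Suc n)\<bar> < \<beta> / 4" using lb[of "Suc n"] N[of "Suc n"] n2 unfolding n_def by auto
  moreover have "1 - \<beta> / 4 \<le> s n" using calculation(1) by linarith
  then have "\<beta> * (1 - \<beta> / 4) \<le> \<beta> * s n" using b by (intro mult_left_mono) auto
  moreover have "\<beta> * (1 - \<beta> / 4) = \<beta> - (\<beta> * \<beta>) / 4" by (simp add: algebra_simps)
  moreover have "\<beta> * \<beta> \<le> \<beta>" using b by (simp add: mult_left_le)
  ultimately show False using rec[of n] b by linarith
qed

lemma necD:
  assumes bip: "\<And>x y. E x y \<Longrightarrow> (x \<in> A \<longleftrightarrow> y \<notin> A)" and A: "A \<subseteq> V"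
    and u: "u \<in> V" and v: "v \<in> V" and ne: "\<not> (\<exists>n. even n \<and> walk E n u v)"
  shows "\<not> (\<lambda>n. wasserstein V E (walk_dist V E 0 u n) (walk_dist V E 0 v n)) \<longlonglongrightarrow> 0"
proof (rule not_tends)
  fix n
  obtain l where l: "walk E l u v" using conw[OF u v] by blast
  then have "odd l" using ne by blast
  then have vA: "v \<in> A \<longleftrightarrow> u \<notin> A" using walk_parity[OF bip l] by auto
  have "\<bar>(\<Sum>w\<in>A. walk_dist V E 0 u n w) - (\<Sum>w\<in>A. walk_dist V E 0 v n w)\<bar>
        \<le> wasserstein V E (walk_dist V E 0 u n) (walk_dist V E 0 v n)"
    by (rule W_lower) (use u v A wd_nonneg wd_mass in auto)
  then show "1 \<le> wasserstein V E (walk_dist V E 0 u n) (walk_dist V E 0 v n)"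
    using wd0_A[OF bip A u, of n] wd0_A[OF bip A v, of n] vA by (auto split: if_splits)
qed simp

end

theorem theorem3p4:
  fixes V :: "'a set" and E :: "'a \<Rightarrow> 'a \<Rightarrow> bool" and u v :: 'a and \<alpha> \<beta> :: real
  assumes "simple_graph V E" and "connected_graph V E"
    and "\<exists>x y. E x y"
    and "u \<in> V" and "v \<in> V"
    and "0 \<le> \<alpha>" and "\<alpha> \<le> \<beta>" and "\<beta> \<le> 1"
  shows "(\<lambda>k. wasserstein V E (walk_dist V E \<alpha> u k) (walk_dist V E \<beta> v k)) \<longlonglongrightarrow> 0
    \<longleftrightarrow> ((0 < \<alpha> \<and> \<alpha> \<le> \<beta> \<and> \<beta> < 1)
       \<or> (\<alpha> = 1 \<and> \<beta> = 1 \<and> u = v)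
       \<or> (\<not> bipartite V E \<and> 0 = \<alpha> \<and> \<alpha> \<le> \<beta> \<and> \<beta> < 1)
       \<or> (\<alpha> = 0 \<and> \<beta> = 0 \<and> (\<exists>n. even n \<and> walk E n u v)))"
    (is "?L \<longleftrightarrow> ?D")
proof -
  note sg = assms(1) and con = assms(2) and u = assms(4) and v = assms(5)
  have nbr: "\<exists>b. E a b" if a: "a \<in> V" for a
  proof -
    obtain x y where xy: "E x y" using assms(3) by blast
    then have xV: "x \<in> V" using sg unfolding simple_graph_def by auto
    obtain n where "walk E n a x" using con a xV unfolding connected_graph_def by blast
    then show "\<exists>b. E a b"
    proof (cases rule: walk.cases)
      case walk0 then show ?thesis using xy by blast
    next
      case (walkS y n) then show ?thesis by blast
    qed
  qed
  interpret G: cgrph V E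
    using sg nbr con by (simp add: cgrph_def grph_def cgrph_axioms_def)
  show ?thesis
  proof
    assume lim: ?L
    show ?D
    proof (rule ccontr)
      assume nd: "\<not> ?D"
      show False
      proof (cases "\<beta> = 1")
        case b1: True
        show False
        proof (cases "\<alpha> = 1")
          case True
          then have "u \<noteq> v" using nd b1 by auto
          then show False using G.necA[OF u v] lim True b1 by simp
        next
          case False
          then have "\<alpha> < 1" using assms by auto
          then show False using G.necB[OF assms(6) _ u v] lim b1 by simp
        qed
      next
        case False
        then have b1: "\<beta> < 1" using assms by auto
        show False
        proof (cases "\<alpha> > 0")
          case True then show False using nd b1 assms by auto
        next
          case False
          then have a0: "\<alpha> = 0" using assms by auto
          show False
          proof (cases "bipartite V E")
            case False then show False using nd a0 b1 assms by auto
          next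
            case True
            then obtain A where A: "A \<subseteq> V" "\<And>x y. E x y \<Longrightarrow> (x \<in> A \<longleftrightarrow> y \<notin> A)"
              unfolding bipartite_def by blast
            show False
            proof (cases "\<beta> = 0")
              case True
              then have "\<not> (\<exists>n. even n \<and> walk E n u v)" using nd a0 by auto
              then show False using G.necD[OF A(2) A(1) u v] lim a0 True by simp
            next
              case False
              then have "0 < \<beta>" using assms by auto
              then show False using G.necC[OF A(2) A(1) _ b1 u v] lim a0 by simp
            qed
          qed
        qed
      qed
    qed
  next
    assume d: ?D
    have a01: "0 \<le> \<alpha>" "\<alpha> \<le> 1" "0 \<le> \<beta>" "\<beta> \<le> 1" using assms by auto
    show ?L
    proof (cases "\<alpha> = \<beta> \<and> u = v")
      case True
      have "(\<lambda>n. G.nrm (\<lambda>w. walk_dist V E \<alpha> u n w - walk_dist V E \<beta> v n w)) \<longlonglongrightarrow> 0"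
        using True by (simp add: G.nrm_def)
      then show ?L by (rule G.W_conv[OF a01 u v])
    next
      case False
      consider (L) "\<alpha> < 1" "\<beta> < 1" "0 < \<alpha> \<or> \<not> bipartite V E"
        | (B) "\<alpha> = 0" "\<beta> = 0" "bipartite V E" "\<exists>n. even n \<and> walk E n u v"
        using d False assms by (cases "bipartite V E") auto
      then show ?L
      proof cases
        case L
        have "0 < \<beta> \<or> \<not> bipartite V E" using L assms by auto
        then have "(\<lambda>n. G.nrm (\<lambda>w. walk_dist V E \<alpha> u n w - walk_dist V E \<beta> v n w)) \<longlonglongrightarrow> 0"
          using G.nrm_conv2[OF G.conv_pi[OF a01(1) L(1) L(3) u] G.conv_pi[OF a01(3) L(2) _ v]] by blast
        then show ?L by (rule G.W_conv[OF a01 u v])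
      next
        case B
        obtain A where A: "A \<subseteq> V" "\<And>x y. E x y \<Longrightarrow> (x \<in> A \<longleftrightarrow> y \<notin> A)"
          using B(3) unfolding bipartite_def by blast
        obtain l where l: "even l" "walk E l u v" using B(4) by blast
        have "(\<lambda>n. G.nrm (\<lambda>w. walk_dist V E 0 u n w - walk_dist V E 0 v n w)) \<longlonglongrightarrow> 0"
          by (rule G.bip_conv[OF A(2) A(1) u v l])
        then show ?L using G.W_conv[OF a01 u v] B by simp
      qed
    qed
  qed
qed


end
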